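(* Consider the coordination game and let $\mathcal Z$ be the set of $z\in\{0,\tfrac1n,\dots,1\}$ such that $z=F_c\!\left(\frac{n}{n-1}(z-\epsilon)\right)$ for every $\epsilon\in(0,\tfrac1n]$. Then for each $z\in\mathcal Z$ there is exactly one Nash equilibrium $x^*$ with $z(x^* )=z$, and the number of Nash equilibria satisfies $|\mathcal N|=|\mathcal Z|$, with $1\le|\mathcal Z|\le n+1$.
   Context: Let $\mathcal V$ be a finite set of $n\ge2$ agents, all coordinating. Given real weights $d_i$, the coordination game has action set $\{-1,+1\}$, configuration space $\mathcal X=\{-1,+1\}^{\mathcal V}$ and utilities $u_i(x)=\sum_{j\neq i}x_ix_j-d_ix_i$. A (pure) Nash equilibrium is an $x\in\mathcal X$ with $u_i(x)\ge u_i(y_i,x_{-i})$ for all $i$ and $y_i\in\{-1,+1\}$; $\mathcal N$ denotes the set of Nash equilibria. Thresholds: $r_i=\tfrac12+\tfrac{d_i}{2(n-1)}$. For $x\in\mathcal X$, $z(x)=\frac1n|\{i: x_i=+1\}|$. The threshold CDF is $F_c(t)=\frac1n|\{i\in\mathcal V: r_i\le t\}|$, $t\in\mathbb R$. *)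

theory Defs
  imports Complex_Main "HOL-Library.FuncSet"
begin

definition configs :: "'a set \<Rightarrow> ('a \<Rightarrow> int) set" where
  "configs V = V \<rightarrow>\<^sub>E {-1, 1}"

definition utility :: "'a set \<Rightarrow> ('a \<Rightarrow> real) \<Rightarrow> 'a \<Rightarrow> ('a \<Rightarrow> int) \<Rightarrow> real" where
  "utility V d i x = (\<Sum>j\<in>V - {i}. real_of_int (x i * x j)) - d i * real_of_int (x i)"

definition nash :: "'a set \<Rightarrow> ('a \<Rightarrow> real) \<Rightarrow> ('a \<Rightarrow> int) set" where
  "nash V d = {x \<in> configs V. \<forall>i\<in>V. \<forall>y\<in>{-1, 1::int}.
       utility V d i x \<ge> utility V d i (x(i := y))}"

definition threshold :: "'a set \<Rightarrow> ('a \<Rightarrow> real) \<Rightarrow> 'a \<Rightarrow> real" where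
  "threshold V d i = 1/2 + d i / (2 * (real (card V) - 1))"

definition zfrac :: "'a set \<Rightarrow> ('a \<Rightarrow> int) \<Rightarrow> real" where
  "zfrac V x = real (card {i\<in>V. x i = 1}) / real (card V)"

definition Fc :: "'a set \<Rightarrow> ('a \<Rightarrow> real) \<Rightarrow> real \<Rightarrow> real" where
  "Fc V d t = real (card {i\<in>V. threshold V d i \<le> t}) / real (card V)"

definition Zset :: "'a set \<Rightarrow> ('a \<Rightarrow> real) \<Rightarrow> real set" where
  "Zset V d = {z. (\<exists>k::nat. k \<le> card V \<and> z = real k / real (card V)) \<and>
     (\<forall>\<epsilon>::real. 0 < \<epsilon> \<and> \<epsilon> \<le> 1 / real (card V) \<longrightarrow>
        z = Fc V d (real (card V) / (real (card V) - 1) * (z - \<epsilon>)))}"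

end

theory Submission imports Defs begin

lemma util_upd:
  assumes "i \<in> V"
  shows "utility V d i (x(i:=y)) = real_of_int y * (\<Sum>j\<in>V-{i}. real_of_int (x j)) - d i * real_of_int y"
proof -
  have "(\<Sum>j\<in>V-{i}. real_of_int (y * (x(i:=y)) j)) = (\<Sum>j\<in>V-{i}. real_of_int y * real_of_int (x j))"
    by (rule sum.cong) auto
  then show ?thesis unfolding utility_def by (simp add: sum_distrib_left)
qed

lemma util_self:
  assumes "i \<in> V"
  shows "utility V d i x = real_of_int (x i) * (\<Sum>j\<in>V-{i}. real_of_int (x j)) - d i * real_of_int (x i)"
  using util_upd[OF assms, of d x "x i"] by simp

lemma conf_val:
  assumes "x \<in> configs V" "j \<in> V" shows "x j = 1 \<or> x j = -1"
  using assms by (auto simp: configs_def PiE_iff)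

lemma sum_conf:
  assumes "finite V" "x \<in> configs V"
  shows "(\<Sum>j\<in>V. real_of_int (x j)) = 2 * real (card {j\<in>V. x j = 1}) - real (card V)"
proof -
  have "(\<Sum>j\<in>V. real_of_int (x j)) = (\<Sum>j\<in>V. 2 * (if x j = 1 then 1 else 0) - 1)"
  proof (rule sum.cong)
    fix j assume "j \<in> V" then show "real_of_int (x j) = 2 * (if x j = 1 then 1 else 0) - 1"
      using conf_val[OF assms(2)] by fastforce
  qed simp
  also have "\<dots> = 2 * (\<Sum>j\<in>V. (if x j = 1 then 1 else 0)) - real (card V)"
    by (simp add: sum_subtractf sum_distrib_left)
  also have "(\<Sum>j\<in>V. (if x j = 1 then 1 else 0::real)) = real (card {j\<in>V. x j = 1})"
    using assms(1) by (simp add: sum.If_cases Collect_conj_eq)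
  finally show ?thesis .
qed

lemma sum_minus:
  assumes "finite V" "x \<in> configs V" "i \<in> V"
  shows "(\<Sum>j\<in>V-{i}. real_of_int (x j)) = 2 * real (card {j\<in>V. x j = 1}) - real (card V) - real_of_int (x i)"
  using sum_conf[OF assms(1,2)] sum.remove[OF assms(1,3), of "\<lambda>j. real_of_int (x j)"] by simp

lemma aux1: assumes "(m::real) > 0"
  shows "(1/2 + dd/(2*m) \<le> b/m) \<longleftrightarrow> dd \<le> 2*b - m"
proof -
  have "1/2 + dd/(2*m) = (m+dd)/(2*m)" using assms by (simp add: field_simps)
  moreover have "b/m = (2*b)/(2*m)" by simp
  ultimately have "(1/2 + dd/(2*m) \<le> b/m) \<longleftrightarrow> (m+dd)/(2*m) \<le> (2*b)/(2*m)" by simp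
  also have "\<dots> \<longleftrightarrow> m + dd \<le> (2*b)/(2*m) * (2*m)" using assms by (simp only: pos_divide_le_eq mult_pos_pos zero_less_numeral)
  also have "(2*b)/(2*m) * (2*m) = 2*b" using assms by simp
  finally show ?thesis by linarith
qed

lemma aux2: assumes "(m::real) > 0"
  shows "(b/m \<le> 1/2 + dd/(2*m)) \<longleftrightarrow> 2*b - m \<le> dd"
proof -
  have "1/2 + dd/(2*m) = (m+dd)/(2*m)" using assms by (simp add: field_simps)
  moreover have "b/m = (2*b)/(2*m)" by simp
  ultimately have "(b/m \<le> 1/2 + dd/(2*m)) \<longleftrightarrow> (2*b)/(2*m) \<le> (m+dd)/(2*m)" by simp
  also have "\<dots> \<longleftrightarrow> (2*b)/(2*m) * (2*m) \<le> m+dd" using assms by (simp only: pos_le_divide_eq mult_pos_pos zero_less_numeral)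
  also have "(2*b)/(2*m) * (2*m) = 2*b" using assms by simp
  finally show ?thesis by linarith
qed

lemma nash_iff:
  assumes fin: "finite V" and n2: "card V \<ge> 2" and xc: "x \<in> configs V"
  defines "k \<equiv> card {j\<in>V. x j = 1}"
  shows "x \<in> nash V d \<longleftrightarrow> (\<forall>i\<in>V. (x i = 1 \<longrightarrow> threshold V d i \<le> (real k - 1)/(real (card V) - 1))
        \<and> (x i = -1 \<longrightarrow> real k/(real (card V) - 1) \<le> threshold V d i))"
proof -
  have m: "real (card V) - 1 > 0" using n2 by simp
  have loc: "(\<forall>y\<in>{-1, 1::int}. utility V d i x \<ge> utility V d i (x(i := y))) \<longleftrightarrow>
     ((x i = 1 \<longrightarrow> threshold V d i \<le> (real k - 1)/(real (card V) - 1))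
        \<and> (x i = -1 \<longrightarrow> real k/(real (card V) - 1) \<le> threshold V d i))" if i: "i \<in> V" for i
  proof -
    define S where "S = (\<Sum>j\<in>V-{i}. real_of_int (x j))"
    have S: "S = 2 * real k - real (card V) - real_of_int (x i)"
      unfolding S_def k_def by (rule sum_minus[OF fin xc i])
    have u1: "utility V d i (x(i := y)) = real_of_int y * S - d i * real_of_int y" for y
      unfolding S_def by (rule util_upd[OF i])
    have u0: "utility V d i x = real_of_int (x i) * S - d i * real_of_int (x i)"
      unfolding S_def by (rule util_self[OF i])
    have t1: "threshold V d i \<le> (real k - 1)/(real (card V) - 1) \<longleftrightarrow> d i \<le> 2 * real k - real (card V) - 1"
      unfolding threshold_def using aux1[OF m, of "d i" "real k - 1"] by simp
    have t2: "real k/(real (card V) - 1) \<le> threshold V d i \<longleftrightarrow> 2 * real k - real (card V) + 1 \<le> d i"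
      unfolding threshold_def using aux2[OF m, of "real k" "d i"] by argo
    show ?thesis
      using conf_val[OF xc i] u0 u1 S t1 t2 by auto
  qed
  show ?thesis unfolding nash_def using loc xc by auto
qed

definition good :: "'a set \<Rightarrow> ('a \<Rightarrow> real) \<Rightarrow> nat \<Rightarrow> bool" where
  "good V d k \<longleftrightarrow> k \<le> card V \<and>
     card {i\<in>V. threshold V d i \<le> (real k - 1)/(real (card V) - 1)} = k \<and>
     (\<forall>i\<in>V. \<not> ((real k - 1)/(real (card V) - 1) < threshold V d i \<and>
                 threshold V d i < real k/(real (card V) - 1)))"

definition xk :: "'a set \<Rightarrow> ('a \<Rightarrow> real) \<Rightarrow> nat \<Rightarrow> 'a \<Rightarrow> int" where
  "xk V d k = restrict (\<lambda>i. if threshold V d i \<le> (real k - 1)/(real (card V) - 1) then 1 else -1) V"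

lemma lt_div: assumes "real (card V) - 1 > 0"
  shows "(real k - 1)/(real (card V) - 1) < real k/(real (card V) - 1)"
  using assms by (simp add: divide_strict_right_mono)

lemma nash_good:
  assumes fin: "finite V" and n2: "card V \<ge> 2" and xn: "x \<in> nash V d"
  defines "k \<equiv> card {j\<in>V. x j = 1}"
  shows "good V d k \<and> x = xk V d k"
proof -
  have m: "real (card V) - 1 > 0" using n2 by simp
  have xc: "x \<in> configs V" using xn by (simp add: nash_def)
  have c: "\<forall>i\<in>V. (x i = 1 \<longrightarrow> threshold V d i \<le> (real k - 1)/(real (card V) - 1))
        \<and> (x i = -1 \<longrightarrow> real k/(real (card V) - 1) \<le> threshold V d i)"
    using nash_iff[OF fin n2 xc, of d] xn unfolding k_def by blast
  have lt: "(real k - 1)/(real (card V) - 1) < real k/(real (card V) - 1)" by (rule lt_div[OF m])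
  have eqs: "{j\<in>V. x j = 1} = {i\<in>V. threshold V d i \<le> (real k - 1)/(real (card V) - 1)}"
    using c conf_val[OF xc] lt by fastforce
  have g1: "k \<le> card V" unfolding k_def using fin by (intro card_mono) auto
  have g2: "card {i\<in>V. threshold V d i \<le> (real k - 1)/(real (card V) - 1)} = k"
    using eqs k_def by simp
  have g3: "\<forall>i\<in>V. \<not> ((real k - 1)/(real (card V) - 1) < threshold V d i \<and>
                 threshold V d i < real k/(real (card V) - 1))"
    using c conf_val[OF xc] by fastforce
  have "x = xk V d k"
  proof
    fix i show "x i = xk V d k i"
    proof (cases "i \<in> V")
      case True then show ?thesis
        using c conf_val[OF xc True] lt unfolding xk_def by auto
    next
      case False then show ?thesis using xc unfolding xk_def configs_def by (auto simp: PiE_iff extensional_def)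
    qed
  qed
  then show ?thesis using g1 g2 g3 unfolding good_def by blast
qed

lemma good_nash:
  assumes fin: "finite V" and n2: "card V \<ge> 2" and g: "good V d k"
  shows "xk V d k \<in> nash V d \<and> card {j\<in>V. xk V d k j = 1} = k"
proof -
  have m: "real (card V) - 1 > 0" using n2 by simp
  have xc: "xk V d k \<in> configs V" unfolding xk_def configs_def by auto
  have eqs: "{j\<in>V. xk V d k j = 1} = {i\<in>V. threshold V d i \<le> (real k - 1)/(real (card V) - 1)}"
    unfolding xk_def by auto
  have ck: "card {j\<in>V. xk V d k j = 1} = k" using eqs g unfolding good_def by simp
  have "\<forall>i\<in>V. (xk V d k i = 1 \<longrightarrow> threshold V d i \<le> (real k - 1)/(real (card V) - 1))
        \<and> (xk V d k i = -1 \<longrightarrow> real k/(real (card V) - 1) \<le> threshold V d i)"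
    using g unfolding good_def xk_def by force
  then have "xk V d k \<in> nash V d" using nash_iff[OF fin n2 xc, of d] ck by simp
  then show ?thesis using ck by blast
qed

lemma zset_iff:
  assumes fin: "finite V" and n2: "card V \<ge> 2" and kn: "k \<le> card V"
  shows "(\<forall>\<epsilon>::real. 0 < \<epsilon> \<and> \<epsilon> \<le> 1 / real (card V) \<longrightarrow>
        real k / real (card V) = Fc V d (real (card V) / (real (card V) - 1) * (real k / real (card V) - \<epsilon>)))
     \<longleftrightarrow> good V d k"
proof -
  obtain n where n_def: "n = real (card V)" by blast
  obtain m where m_def: "m = n - 1" by blast
  have m: "m > 0" using n2 unfolding m_def n_def by simp
  have n: "n > 0" using n2 unfolding n_def by simp
  obtain A where A_def: "A = (\<lambda>t. {i\<in>V. threshold V d i \<le> t})" by blast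
  have mm: "real (card V) - 1 = m" unfolding m_def n_def by simp
  have gd: "good V d k \<longleftrightarrow> k \<le> card V \<and> card (A ((real k - 1)/m)) = k \<and>
     (\<forall>i\<in>V. \<not> ((real k - 1)/m < threshold V d i \<and> threshold V d i < real k/m))"
    unfolding good_def A_def mm ..
  have finA: "finite (A t)" for t unfolding A_def using fin by simp
  have tt: "n / m * (real k / n - \<epsilon>) = (real k - n * \<epsilon>) / m" for \<epsilon>
    using n m by (simp add: field_simps)
  have Fceq: "(real k / n = Fc V d t) \<longleftrightarrow> card (A t) = k" for t
    unfolding Fc_def A_def n_def[symmetric] using n by (auto simp: divide_cancel_right)
  show ?thesis unfolding n_def[symmetric] m_def[symmetric]
  proof
    assume H: "\<forall>\<epsilon>. 0 < \<epsilon> \<and> \<epsilon> \<le> 1 / n \<longrightarrow> real k / n = Fc V d (n / m * (real k / n - \<epsilon>))"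
    have tt1: "n / m * (real k / n - 1/n) = (real k - 1) / m"
      using n m by (simp add: field_simps)
    have "real k / n = Fc V d ((real k - 1) / m)"
      using H[rule_format, of "1/n"] n unfolding tt1 by simp
    then have "card (A ((real k - 1)/m)) = k" using Fceq by blast
    moreover have "\<forall>i\<in>V. \<not> ((real k - 1)/m < threshold V d i \<and> threshold V d i < real k/m)"
    proof (intro ballI notI)
      fix i assume iV: "i \<in> V" and gap: "(real k - 1)/m < threshold V d i \<and> threshold V d i < real k/m"
      define e where "e = (real k - m * threshold V d i) / n"
      have e1: "0 < e" using gap m n unfolding e_def by (simp add: field_simps)
      have gm: "real k - 1 < m * threshold V d i" using gap m by (simp add: field_simps)
      have e2: "e \<le> 1/n" using gm n unfolding e_def by (intro divide_right_mono) auto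
      have "(real k - n * e) / m = threshold V d i" using n m unfolding e_def by (simp add: field_simps)
      then have "real k / n = Fc V d (threshold V d i)"
        using H[rule_format, of e] e1 e2 unfolding tt[of e] by simp
      then have c2: "card (A (threshold V d i)) = k" using Fceq by blast
      have s1: "A ((real k - 1)/m) \<subseteq> A (threshold V d i)"
        using gap unfolding A_def by auto
      have s2: "i \<in> A (threshold V d i)" "i \<notin> A ((real k - 1)/m)"
        using gap iV unfolding A_def by auto
      have "A ((real k - 1)/m) \<subset> A (threshold V d i)" using s1 s2 by blast
      then have "card (A ((real k - 1)/m)) < card (A (threshold V d i))"
        by (rule psubset_card_mono[OF finA])
      with c2 \<open>card (A ((real k - 1)/m)) = k\<close> show False by simp
    qed
    ultimately show "good V d k" using kn gd by simp
  next
    assume g: "good V d k"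
    show "\<forall>\<epsilon>. 0 < \<epsilon> \<and> \<epsilon> \<le> 1 / n \<longrightarrow> real k / n = Fc V d (n / m * (real k / n - \<epsilon>))"
    proof (intro allI impI)
      fix e assume e: "0 < e \<and> e \<le> 1 / n"
      have t1: "(real k - 1)/m \<le> (real k - n * e) / m"
        using e n m by (intro divide_right_mono) (auto simp: field_simps)
      have t2: "(real k - n * e) / m < real k / m"
        using e n m by (intro divide_strict_right_mono) auto
      have "A ((real k - n * e) / m) = A ((real k - 1)/m)"
        using g t1 t2 unfolding gd unfolding A_def by force
      then show "real k / n = Fc V d (n / m * (real k / n - e))"
        using g Fceq unfolding gd tt by simp
    qed
  qed
qed

lemma exists_good:
  assumes fin: "finite V" and n2: "card V \<ge> 2"
  shows "\<exists>k. good V d k"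
proof -
  obtain m where m_def: "m = real (card V) - 1" by blast
  have m: "m > 0" using n2 m_def by simp
  obtain B where B_def: "B = (\<lambda>k::nat. {i\<in>V. threshold V d i < real k / m})" by blast
  obtain A where A_def: "A = (\<lambda>k::nat. {i\<in>V. threshold V d i \<le> (real k - 1) / m})" by blast
  have finA: "finite (A k)" for k using fin A_def by simp
  have finB: "finite (B k)" for k using fin B_def by simp
  have AB: "A k \<subseteq> B k" for k
    using lt_div[of V k] m m_def unfolding A_def B_def by auto
  have Pn: "card (B (card V)) \<le> card V" using fin B_def by (intro card_mono) auto
  define k0 where "k0 = (LEAST k. card (B k) \<le> k)"
  have k0: "card (B k0) \<le> k0" unfolding k0_def by (rule LeastI[of _ "card V"]) (rule Pn)
  have k0n: "k0 \<le> card V" unfolding k0_def by (rule Least_le) (rule Pn)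
  have Ak0: "k0 \<le> card (A k0)"
  proof (cases k0)
    case 0 then show ?thesis by simp
  next
    case (Suc j)
    have "\<not> card (B j) \<le> j" unfolding k0_def by (rule not_less_Least) (use Suc k0_def in simp)
    then have "k0 \<le> card (B j)" using Suc by simp
    also have "B j \<subseteq> A k0" using Suc unfolding A_def B_def by auto
    then have "card (B j) \<le> card (A k0)" by (rule card_mono[OF finA])
    finally show ?thesis .
  qed
  have cA: "card (A k0) = k0" using Ak0 k0 card_mono[OF finB AB, of k0] by simp
  have cB: "card (B k0) = k0" using Ak0 k0 card_mono[OF finB AB, of k0] by simp
  have gap: "\<forall>i\<in>V. \<not> ((real k0 - 1)/m < threshold V d i \<and> threshold V d i < real k0/m)"
  proof (intro ballI notI)
    fix i assume iV: "i \<in> V" and g: "(real k0 - 1)/m < threshold V d i \<and> threshold V d i < real k0/m"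
    have "i \<in> B k0" "i \<notin> A k0" using iV g unfolding A_def B_def by auto
    then have "A k0 \<subset> B k0" using AB[of k0] by blast
    then have "card (A k0) < card (B k0)" by (rule psubset_card_mono[OF finB])
    with cA cB show False by simp
  qed
  have "good V d k0" unfolding good_def m_def[symmetric] using k0n cA gap A_def by simp
  then show ?thesis by blast
qed

theorem mainTheorem4:
  fixes V :: "'a set" and d :: "'a \<Rightarrow> real"
  assumes "finite V" and "card V \<ge> 2"
  shows "(\<forall>z\<in>Zset V d. \<exists>!x. x \<in> nash V d \<and> zfrac V x = z)
         \<and> card (nash V d) = card (Zset V d)
         \<and> 1 \<le> card (Zset V d) \<and> card (Zset V d) \<le> card V + 1"
proof -
  note fin = assms(1) and n2 = assms(2)
  have n: "real (card V) > 0" using n2 by simp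
  define G where "G = {k. good V d k}"
  have GV: "G \<subseteq> {0..card V}"
  proof
    fix k assume "k \<in> G" then have "k \<le> card V" unfolding G_def good_def by blast
    then show "k \<in> {0..card V}" by simp
  qed
  have finG: "finite G" using GV finite_subset by blast
  have Gne: "G \<noteq> {}" using exists_good[OF fin n2, of d] unfolding G_def by blast
  have divinj: "real k / real (card V) = real k' / real (card V) \<longleftrightarrow> k = k'" for k k'
    using n by (auto simp: divide_cancel_right)
  have Z: "Zset V d = (\<lambda>k. real k / real (card V)) ` G"
  proof
    show "Zset V d \<subseteq> (\<lambda>k. real k / real (card V)) ` G"
    proof
      fix z assume "z \<in> Zset V d"
      then obtain k where k: "k \<le> card V" "z = real k / real (card V)"
        and H: "\<forall>\<epsilon>::real. 0 < \<epsilon> \<and> \<epsilon> \<le> 1 / real (card V) \<longrightarrow>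
          z = Fc V d (real (card V) / (real (card V) - 1) * (z - \<epsilon>))"
        unfolding Zset_def by blast
      have "good V d k" using zset_iff[OF fin n2 k(1), of d] H k(2) by simp
      then show "z \<in> (\<lambda>k. real k / real (card V)) ` G" using k(2) G_def by blast
    qed
  next
    show "(\<lambda>k. real k / real (card V)) ` G \<subseteq> Zset V d"
    proof
      fix z assume "z \<in> (\<lambda>k. real k / real (card V)) ` G"
      then obtain k where k: "good V d k" "z = real k / real (card V)" unfolding G_def by blast
      have kn: "k \<le> card V" using k(1) good_def by blast
      show "z \<in> Zset V d" unfolding Zset_def using zset_iff[OF fin n2 kn, of d] k kn by auto
    qed
  qed
  have injZ: "inj_on (\<lambda>k. real k / real (card V)) G" using divinj by (auto simp: inj_on_def)
  have N: "nash V d = xk V d ` G"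
  proof
    show "nash V d \<subseteq> xk V d ` G"
    proof
      fix x assume "x \<in> nash V d"
      then have g: "good V d (card {j\<in>V. x j = 1}) \<and> x = xk V d (card {j\<in>V. x j = 1})"
        by (rule nash_good[OF fin n2])
      then have "card {j\<in>V. x j = 1} \<in> G" unfolding G_def by simp
      then show "x \<in> xk V d ` G" using g by (intro image_eqI) auto
    qed
    show "xk V d ` G \<subseteq> nash V d"
    proof
      fix x assume "x \<in> xk V d ` G"
      then obtain k where "good V d k" "x = xk V d k" unfolding G_def by blast
      then show "x \<in> nash V d" using good_nash[OF fin n2] by blast
    qed
  qed
  have injN: "inj_on (xk V d) G"
  proof (rule inj_onI)
    fix k k' assume "k \<in> G" "k' \<in> G" "xk V d k = xk V d k'"
    then have "good V d k" "good V d k'" "xk V d k = xk V d k'" unfolding G_def by auto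
    then show "k = k'" using good_nash[OF fin n2, of d k] good_nash[OF fin n2, of d k'] by metis
  qed
  have cZ: "card (Zset V d) = card G" unfolding Z by (rule card_image[OF injZ])
  have cN: "card (nash V d) = card G" unfolding N by (rule card_image[OF injN])
  have c1: "1 \<le> card G" using finG Gne by (simp add: Suc_leI card_gt_0_iff)
  have c2: "card G \<le> card V + 1" using card_mono[OF _ GV] by simp
  have U: "\<exists>!x. x \<in> nash V d \<and> zfrac V x = z" if z: "z \<in> Zset V d" for z
  proof -
    obtain k where k: "good V d k" "z = real k / real (card V)" using z Z G_def by auto
    have ex: "xk V d k \<in> nash V d \<and> zfrac V (xk V d k) = z"
      using good_nash[OF fin n2 k(1)] k(2) unfolding zfrac_def by simp
    show ?thesis
    proof (rule ex1I[where a = "xk V d k"])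
      show "xk V d k \<in> nash V d \<and> zfrac V (xk V d k) = z" by (rule ex)
    next
      fix x assume x: "x \<in> nash V d \<and> zfrac V x = z"
      have g: "good V d (card {j\<in>V. x j = 1}) \<and> x = xk V d (card {j\<in>V. x j = 1})"
        using nash_good[OF fin n2] x by blast
      have "real (card {j\<in>V. x j = 1}) / real (card V) = real k / real (card V)"
        using x k(2) unfolding zfrac_def by simp
      then have "card {j\<in>V. x j = 1} = k" using divinj by blast
      then show "x = xk V d k" using g by simp
    qed
  qed
  have A1: "\<forall>z\<in>Zset V d. \<exists>!x. x \<in> nash V d \<and> zfrac V x = z" using U by blast
  show ?thesis
  proof (intro conjI)
    show "\<forall>z\<in>Zset V d. \<exists>!x. x \<in> nash V d \<and> zfrac V x = z" by (rule A1)
    show "card (nash V d) = card (Zset V d)" using cZ cN by simp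
    show "1 \<le> card (Zset V d)" using cZ c1 by simp
    show "card (Zset V d) \<le> card V + 1" using cZ c2 by simp
  qed
qed

end
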